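(* Let $n\ge 3$ and let $K_{1,n}^\sigma=(K_{1,n},\sigma)$ be a signed star that is non-homogeneous (it has at least one positive and at least one negative edge). Then $\dim(K_{1,n}^\sigma)=n-2$.
   Context: A signed graph $\Sigma=(G,\sigma)$ consists of a finite simple connected graph $G=(V,E)$ and a signature $\sigma:E\to\{+1,-1\}$; it is homogeneous if all edges have the same sign and non-homogeneous otherwise. For vertices $u,v$, $d(u,v)$ denotes the usual distance in $G$; the sign of a path $P$ is $\sigma(P)=\prod_{e\in P}\sigma(e)$. Set $\sigma_{\max}(uv)=-1$ if every shortest $u$–$v$ path has sign $-1$, and $\sigma_{\max}(uv)=+1$ otherwise; set $\sigma_{\min}(uv)=+1$ if every shortest $u$–$v$ path has sign $+1$, and $\sigma_{\min}(uv)=-1$ otherwise. $\Sigma$ is (distance) compatible if $\sigma_{\max}(uv)d(u,v)=\sigma_{\min}(uv)d(u,v)$ for all vertices $u,v$ (trees are always compatible); in that case the signed distance is $d_\Sigma(u,v)=\sigma_{\max}(uv)\,d(u,v)$. For a compatible $\Sigma$ and an ordered subset $W=(w_1,\dots,w_k)$ of $V$, the metric representation of $v\in V$ is $r_\Sigma(v|W)=(d_\Sigma(v,w_1),\dots,d_\Sigma(v,w_k))$. $W$ is a resolving set of $\Sigma$ if $r_\Sigma(u|W)\neq r_\Sigma(v|W)$ for all distinct $u,v\in V$; a basis is a resolving set of minimum cardinality, and that cardinality is the metric dimension $\dim(\Sigma)$. *)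

theory Defs
  imports Main
begin

definition simple_graph :: "'a set \<Rightarrow> 'a set set \<Rightarrow> bool" where
  "simple_graph V E \<longleftrightarrow> finite V \<and> (\<forall>e\<in>E. \<exists>u v. e = {u, v} \<and> u \<in> V \<and> v \<in> V \<and> u \<noteq> v)"

definition is_path :: "'a set \<Rightarrow> 'a set set \<Rightarrow> 'a list \<Rightarrow> bool" where
  "is_path V E p \<longleftrightarrow> p \<noteq> [] \<and> set p \<subseteq> V \<and> distinct p \<and>
      (\<forall>i. Suc i < length p \<longrightarrow> {p ! i, p ! Suc i} \<in> E)"

definition connected_graph :: "'a set \<Rightarrow> 'a set set \<Rightarrow> bool" where
  "connected_graph V E \<longleftrightarrow> (\<forall>u\<in>V. \<forall>v\<in>V. \<exists>p. is_path V E p \<and> hd p = u \<and> last p = v)"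

definition signed_graph :: "'a set \<Rightarrow> 'a set set \<Rightarrow> ('a set \<Rightarrow> int) \<Rightarrow> bool" where
  "signed_graph V E \<sigma> \<longleftrightarrow> simple_graph V E \<and> connected_graph V E \<and> (\<forall>e\<in>E. \<sigma> e \<in> {1, -1})"

definition path_len :: "'a list \<Rightarrow> nat" where
  "path_len p = length p - 1"

definition gdist :: "'a set \<Rightarrow> 'a set set \<Rightarrow> 'a \<Rightarrow> 'a \<Rightarrow> nat" where
  "gdist V E u v = (LEAST n. \<exists>p. is_path V E p \<and> hd p = u \<and> last p = v \<and> path_len p = n)"

definition shortest_paths :: "'a set \<Rightarrow> 'a set set \<Rightarrow> 'a \<Rightarrow> 'a \<Rightarrow> 'a list set" where
  "shortest_paths V E u v =
     {p. is_path V E p \<and> hd p = u \<and> last p = v \<and> path_len p = gdist V E u v}"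

definition path_sign :: "('a set \<Rightarrow> int) \<Rightarrow> 'a list \<Rightarrow> int" where
  "path_sign \<sigma> p = prod_list (map (\<lambda>(x, y). \<sigma> {x, y}) (zip p (tl p)))"

definition sigma_max :: "'a set \<Rightarrow> 'a set set \<Rightarrow> ('a set \<Rightarrow> int) \<Rightarrow> 'a \<Rightarrow> 'a \<Rightarrow> int" where
  "sigma_max V E \<sigma> u v =
     (if \<forall>p\<in>shortest_paths V E u v. path_sign \<sigma> p = -1 then -1 else 1)"

definition sigma_min :: "'a set \<Rightarrow> 'a set set \<Rightarrow> ('a set \<Rightarrow> int) \<Rightarrow> 'a \<Rightarrow> 'a \<Rightarrow> int" where
  "sigma_min V E \<sigma> u v =
     (if \<forall>p\<in>shortest_paths V E u v. path_sign \<sigma> p = 1 then 1 else -1)"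

definition compatible :: "'a set \<Rightarrow> 'a set set \<Rightarrow> ('a set \<Rightarrow> int) \<Rightarrow> bool" where
  "compatible V E \<sigma> \<longleftrightarrow> (\<forall>u\<in>V. \<forall>v\<in>V.
      sigma_max V E \<sigma> u v * int (gdist V E u v) = sigma_min V E \<sigma> u v * int (gdist V E u v))"

definition signed_dist :: "'a set \<Rightarrow> 'a set set \<Rightarrow> ('a set \<Rightarrow> int) \<Rightarrow> 'a \<Rightarrow> 'a \<Rightarrow> int" where
  "signed_dist V E \<sigma> u v = sigma_max V E \<sigma> u v * int (gdist V E u v)"

text \<open>W resolves: distinct vertices have distinct vectors of signed distances to W
  (the ordering of W is irrelevant for this).\<close>
definition resolving_set :: "'a set \<Rightarrow> 'a set set \<Rightarrow> ('a set \<Rightarrow> int) \<Rightarrow> 'a set \<Rightarrow> bool" where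
  "resolving_set V E \<sigma> W \<longleftrightarrow> W \<subseteq> V \<and>
     (\<forall>u\<in>V. \<forall>v\<in>V. u \<noteq> v \<longrightarrow> (\<exists>w\<in>W. signed_dist V E \<sigma> u w \<noteq> signed_dist V E \<sigma> v w))"

definition metric_dim :: "'a set \<Rightarrow> 'a set set \<Rightarrow> ('a set \<Rightarrow> int) \<Rightarrow> nat" where
  "metric_dim V E \<sigma> = (LEAST k. \<exists>W. resolving_set V E \<sigma> W \<and> card W = k)"

definition is_star :: "'a set \<Rightarrow> 'a set set \<Rightarrow> nat \<Rightarrow> bool" where
  "is_star V E n \<longleftrightarrow> (\<exists>c L. c \<notin> L \<and> finite L \<and> card L = n \<and> V = insert c L \<and>
      E = (\<lambda>l. {c, l}) ` L)"

definition non_homogeneous :: "'a set set \<Rightarrow> ('a set \<Rightarrow> int) \<Rightarrow> bool" where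
  "non_homogeneous E \<sigma> \<longleftrightarrow> (\<exists>e\<in>E. \<sigma> e = 1) \<and> (\<exists>e\<in>E. \<sigma> e = -1)"

end

theory Submission imports Defs begin

lemma is_path2: "is_path V E [a,b] \<longleftrightarrow> a \<in> V \<and> b \<in> V \<and> a \<noteq> b \<and> {a,b} \<in> E"
  unfolding is_path_def by (auto simp: less_Suc_eq)

lemma is_path3: "is_path V E [a,b,d] \<longleftrightarrow> a \<in> V \<and> b \<in> V \<and> d \<in> V \<and> distinct [a,b,d] \<and> {a,b} \<in> E \<and> {b,d} \<in> E"
  unfolding is_path_def by (auto simp: less_Suc_eq nth_Cons split: nat.splits)

lemma path_len_ge: assumes "is_path V E p" "hd p \<noteq> last p" shows "length p \<ge> 2"
proof -
  have "p \<noteq> []" using assms unfolding is_path_def by auto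
  hence "length p \<noteq> 0" by simp
  moreover have "length p \<noteq> 1" using assms by (auto simp: length_Suc_conv)
  ultimately show ?thesis by linarith
qed

lemma len2: "length q = 2 \<Longrightarrow> \<exists>a b. q = [a,b]"
  by (auto simp: length_Suc_conv numeral_2_eq_2)
lemma len3: "length q = 3 \<Longrightarrow> \<exists>a b d. q = [a,b,d]"
  by (auto simp: length_Suc_conv numeral_3_eq_3)

lemma gdist_eq:
  assumes "is_path V E p" "hd p = u" "last p = v" "path_len p = k"
    and "\<And>q. is_path V E q \<Longrightarrow> hd q = u \<Longrightarrow> last q = v \<Longrightarrow> k \<le> path_len q"
  shows "gdist V E u v = k"
  unfolding gdist_def
  apply (rule Least_equality)
  using assms by blast+

locale star =
  fixes c :: 'a and L V E and \<sigma> :: "'a set \<Rightarrow> int"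
  assumes cL: "c \<notin> L" and VV: "V = insert c L" and EE: "E = (\<lambda>l. {c,l}) ` L"
    and sg: "\<forall>e\<in>E. \<sigma> e \<in> {1,-1}"
begin

lemma edge_iff: "{x,y} \<in> E \<longleftrightarrow> (x = c \<and> y \<in> L) \<or> (y = c \<and> x \<in> L)"
  using cL unfolding EE by (auto simp: doubleton_eq_iff)

lemma sgn: "l \<in> L \<Longrightarrow> \<sigma> {c,l} = 1 \<or> \<sigma> {c,l} = -1"
  using sg unfolding EE by auto

lemma sd_same: "x \<in> V \<Longrightarrow> signed_dist V E \<sigma> x x = 0"
proof -
  assume x: "x \<in> V"
  have "gdist V E x x = 0"
    by (rule gdist_eq[of V E "[x]"]) (auto simp: is_path_def x path_len_def)
  thus ?thesis by (simp add: signed_dist_def)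
qed

lemma sd_cl: assumes l: "l \<in> L"
  shows "signed_dist V E \<sigma> c l = \<sigma> {c,l}" "signed_dist V E \<sigma> l c = \<sigma> {c,l}"
proof -
  have lc: "l \<noteq> c" using l cL by auto
  have lb: "1 \<le> path_len q" if "is_path V E q" "hd q \<noteq> last q" for q
    using path_len_ge[OF that] by (simp add: path_len_def)
  have g: "gdist V E c l = 1"
    apply (rule gdist_eq[of V E "[c,l]"])
    using l lc lb by (auto simp: is_path2 edge_iff VV path_len_def)
  have sp: "shortest_paths V E c l = {[c,l]}"
  proof
    show "shortest_paths V E c l \<subseteq> {[c,l]}"
    proof
      fix q assume "q \<in> shortest_paths V E c l"
      hence q: "is_path V E q" "hd q = c" "last q = l" "length q = 2"
        unfolding shortest_paths_def g path_len_def by auto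
      then obtain a b where "q = [a,b]" using len2 by blast
      thus "q \<in> {[c,l]}" using q by auto
    qed
    show "{[c,l]} \<subseteq> shortest_paths V E c l"
      unfolding shortest_paths_def g using l lc by (auto simp: is_path2 edge_iff VV path_len_def)
  qed
  have g': "gdist V E l c = 1"
    apply (rule gdist_eq[of V E "[l,c]"])
    using l lc lb by (auto simp: is_path2 edge_iff VV path_len_def)
  have sp': "shortest_paths V E l c = {[l,c]}"
  proof
    show "shortest_paths V E l c \<subseteq> {[l,c]}"
    proof
      fix q assume "q \<in> shortest_paths V E l c"
      hence q: "is_path V E q" "hd q = l" "last q = c" "length q = 2"
        unfolding shortest_paths_def g' path_len_def by auto
      then obtain a b where "q = [a,b]" using len2 by blast
      thus "q \<in> {[l,c]}" using q by auto
    qed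
    show "{[l,c]} \<subseteq> shortest_paths V E l c"
      unfolding shortest_paths_def g' using l lc by (auto simp: is_path2 edge_iff VV path_len_def)
  qed
  show "signed_dist V E \<sigma> c l = \<sigma> {c,l}"
    using sgn[OF l] by (auto simp: signed_dist_def g sp sigma_max_def path_sign_def)
  show "signed_dist V E \<sigma> l c = \<sigma> {c,l}"
    using sgn[OF l] by (auto simp: signed_dist_def g' sp' sigma_max_def path_sign_def insert_commute)
qed

lemma sd_ll: assumes l: "l \<in> L" and l': "l' \<in> L" and ne: "l \<noteq> l'"
  shows "signed_dist V E \<sigma> l l' = 2 * \<sigma> {c,l} * \<sigma> {c,l'}"
proof -
  have lc: "l \<noteq> c" "l' \<noteq> c" using l l' cL by auto
  have lb: "2 \<le> path_len q" if "is_path V E q" "hd q = l" "last q = l'" for q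
  proof -
    have "length q \<ge> 2" using path_len_ge[OF that(1)] that ne by auto
    moreover have "length q \<noteq> 2"
      using that ne lc by (auto simp: length_Suc_conv numeral_2_eq_2 is_path2 edge_iff)
    ultimately show ?thesis by (simp add: path_len_def)
  qed
  have g: "gdist V E l l' = 2"
    apply (rule gdist_eq[of V E "[l,c,l']"])
    using l l' lc ne lb by (auto simp: is_path3 edge_iff VV path_len_def)
  have sp: "shortest_paths V E l l' = {[l,c,l']}"
  proof
    show "shortest_paths V E l l' \<subseteq> {[l,c,l']}"
    proof
      fix q assume "q \<in> shortest_paths V E l l'"
      hence q: "is_path V E q" "hd q = l" "last q = l'" "length q = 3"
        unfolding shortest_paths_def g path_len_def by auto
      then obtain a b d where "q = [a,b,d]" using len3 by blast
      thus "q \<in> {[l,c,l']}" using q lc by (auto simp: is_path3 edge_iff)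
    qed
    show "{[l,c,l']} \<subseteq> shortest_paths V E l l'"
      unfolding shortest_paths_def g using l l' lc ne by (auto simp: is_path3 edge_iff VV path_len_def)
  qed
  show ?thesis
    using sgn[OF l] sgn[OF l'] by (auto simp: signed_dist_def g sp sigma_max_def path_sign_def insert_commute)
qed


lemma sd_nz: assumes "x \<in> V" "y \<in> V" "x \<noteq> y" shows "signed_dist V E \<sigma> x y \<noteq> 0"
proof -
  consider "x = c" "y \<in> L" | "y = c" "x \<in> L" | "x \<in> L" "y \<in> L"
    using assms VV by auto
  thus ?thesis
  proof cases
    case 1 thus ?thesis using sd_cl sgn by fastforce
  next
    case 2 thus ?thesis using sd_cl sgn by fastforce
  next
    case 3 thus ?thesis using sd_ll[OF 3 assms(3)] sgn[of x] sgn[of y] by auto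
  qed
qed

lemma same_sign_eq:
  assumes W: "resolving_set V E \<sigma> W" and l: "l \<in> L - W" and l': "l' \<in> L - W"
    and s: "\<sigma> {c,l} = \<sigma> {c,l'}"
  shows "l = l'"
proof (rule ccontr)
  assume ne: "l \<noteq> l'"
  have lV: "l \<in> V" "l' \<in> V" using l l' VV by auto
  from W ne lV obtain w where w: "w \<in> W" "signed_dist V E \<sigma> l w \<noteq> signed_dist V E \<sigma> l' w"
    unfolding resolving_set_def by blast
  have "w \<in> V" using W w unfolding resolving_set_def by auto
  hence "w = c \<or> w \<in> L" using VV by auto
  moreover have "w \<noteq> l" "w \<noteq> l'" using w l l' by auto
  ultimately show False
    using w(2) sd_cl(2)[of l] sd_cl(2)[of l'] sd_ll[of l w] sd_ll[of l' w] l l' s by auto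
qed

end
theorem theorem2p9:
  fixes V :: "'a set" and E :: "'a set set" and \<sigma> :: "'a set \<Rightarrow> int" and n :: nat
  assumes "n \<ge> 3"
    and "is_star V E n"
    and "signed_graph V E \<sigma>"
    and "non_homogeneous E \<sigma>"
  shows "metric_dim V E \<sigma> = n - 2"
proof -
  obtain c L where st: "c \<notin> L" "finite L" "card L = n" "V = insert c L" "E = (\<lambda>l. {c, l}) ` L"
    using assms(2) unfolding is_star_def by blast
  have sg: "\<forall>e\<in>E. \<sigma> e \<in> {1,-1}" using assms(3) unfolding signed_graph_def by blast
  interpret star c L V E \<sigma> using st sg by unfold_locales auto
  obtain p where p: "p \<in> L" "\<sigma> {c,p} = 1" using assms(4) st(5) unfolding non_homogeneous_def by auto
  obtain q where q: "q \<in> L" "\<sigma> {c,q} = -1" using assms(4) st(5) unfolding non_homogeneous_def by auto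
  have pq: "p \<noteq> q" using p q by auto
  define W0 where "W0 = L - {p,q}"
  have cW0: "card W0 = n - 2" unfolding W0_def using p q pq st by (simp add: card_Diff_subset)
  then obtain w0 where w0: "w0 \<in> W0" using assms(1) by fastforce
  have w0L: "w0 \<in> L" "w0 \<noteq> p" "w0 \<noteq> q" using w0 unfolding W0_def by auto
  have res: "resolving_set V E \<sigma> W0"
    unfolding resolving_set_def
  proof (intro conjI ballI impI)
    show "W0 \<subseteq> V" unfolding W0_def using st by auto
  next
    fix u v assume uv: "u \<in> V" "v \<in> V" "u \<noteq> v"
    show "\<exists>w\<in>W0. signed_dist V E \<sigma> u w \<noteq> signed_dist V E \<sigma> v w"
    proof (cases "u \<in> W0 \<or> v \<in> W0")
      case True
      thus ?thesis
      proof
        assume "u \<in> W0" thus ?thesis using sd_same[OF uv(1)] sd_nz[OF uv(2,1)] uv by (metis)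
      next
        assume "v \<in> W0" thus ?thesis using sd_same[OF uv(2)] sd_nz[OF uv(1,2)] uv by (metis)
      qed
    next
      case False
      hence "u \<in> {c,p,q}" "v \<in> {c,p,q}" using uv st(4) unfolding W0_def by auto
      moreover have "signed_dist V E \<sigma> c w0 = \<sigma> {c,w0}" using sd_cl w0L by auto
      moreover have "signed_dist V E \<sigma> p w0 = 2 * \<sigma> {c,w0}" using sd_ll[of p w0] p w0L by auto
      moreover have "signed_dist V E \<sigma> q w0 = - 2 * \<sigma> {c,w0}" using sd_ll[of q w0] q w0L by auto
      moreover have "\<sigma> {c,w0} = 1 \<or> \<sigma> {c,w0} = -1" using sgn w0L by auto
      ultimately have "signed_dist V E \<sigma> u w0 \<noteq> signed_dist V E \<sigma> v w0" using uv(3) by auto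
      thus ?thesis using w0 by blast
    qed
  qed
  have lower: "n - 2 \<le> card W" if W: "resolving_set V E \<sigma> W" for W
  proof -
    have fW: "finite W" using W st unfolding resolving_set_def by (auto intro: finite_subset)
    define P where "P = {l \<in> L - W. \<sigma> {c,l} = 1}"
    define N where "N = {l \<in> L - W. \<sigma> {c,l} = -1}"
    have "L - W \<subseteq> P \<union> N" unfolding P_def N_def using sgn by auto
    have cP: "card P \<le> 1" unfolding P_def
      using same_sign_eq[OF W] by (auto simp: card_le_Suc0_iff_eq st)
    have cN: "card N \<le> 1" unfolding N_def
      using same_sign_eq[OF W] by (auto simp: card_le_Suc0_iff_eq st)
    have "card (L - W) \<le> card (P \<union> N)"
      using \<open>L - W \<subseteq> P \<union> N\<close> by (rule card_mono[rotated]) (auto simp: P_def N_def st)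
    also have "\<dots> \<le> 2" using card_Un_le[of P N] cP cN by linarith
    finally have a: "card (L - W) \<le> 2" .
    have "card L \<le> card ((L \<inter> W) \<union> (L - W))" by (simp add: Int_Diff_Un)
    also have "\<dots> \<le> card (L \<inter> W) + card (L - W)" by (rule card_Un_le)
    also have "card (L \<inter> W) \<le> card W" using fW by (simp add: card_mono)
    finally show ?thesis using a st(3) by linarith
  qed
  show ?thesis unfolding metric_dim_def
    apply (rule Least_equality)
    using res cW0 lower by blast+
qed

end
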